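(* Let $f:\mathbb{R}^n\to\mathbb{R}$ be convex and continuously differentiable with locally Lipschitz gradient, with $\mathcal{X}^*:=\arg\min f\neq\emptyset$ and optimal value $f^*$. Fix $x^0$, $\alpha_0>0$, $\theta_0>0$, $\tau\ge1$, $0<\omega\le\frac1{\sqrt2}$, $\gamma_k\in[\gamma_{\min},\gamma_{\max}]\subset(0,\infty)$, and generate $x^{k+1}=x^k-\alpha_k\gamma_k\nabla f(x^k)$ with, for $k\ge1$, $L_k:=\frac{\|\nabla f(x^k)-\nabla f(x^{k-1})\|}{\|x^k-x^{k-1}\|}$, $\alpha_k:=\min\{\frac{\alpha_{k-1}\gamma_{k-1}}{\gamma_k}\sqrt{2(1-\omega^2)+\theta_{k-1}/\tau},\frac{\omega}{\gamma_kL_k}\}$, $\theta_k:=\frac{\alpha_k\gamma_k}{\alpha_{k-1}\gamma_{k-1}}$. Let $\eta:=\mathrm{dist}^2(x^0;\mathcal{X}^* )+2\alpha_0^2\gamma_0^2\|\nabla f(x^0)\|^2+2\alpha_0\gamma_0\theta_0(f(x^0)-f^* )$, let $W:=\overline B(0;R)$ with $R>\sqrt\eta+\mathrm{dist}(x^0;\mathcal{X}^* )+\|x^0\|$, and let $L_W>0$ satisfy $\|\nabla f(x)-\nabla f(y)\|\le L_W\|x-y\|$ on $W$. Then: (a) $\min_{1\le k\le N}\|\nabla f(x^k)\|\le\sqrt{\frac{L_W^2\eta}{N\min\{L_W\alpha_0\gamma_0,\omega\}}}$ for all $N\in\mathbb{N}$, and for every $\varepsilon>0$ the first index $N_{\nabla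 f}(\varepsilon)$ with $\|\nabla f(x^k)\|\le\varepsilon$ satisfies $N_{\nabla f}(\varepsilon)\le\Big\lceil1+\frac{L_W^2\eta}{\varepsilon^2\min\{L_W\alpha_0\gamma_0,\omega\}}\Big\rceil$; (b) with $f_N^*:=\min\{f(x^k):0\le k\le N\}$, one has $f_N^*-f^*\le\frac{L_W((R+\|x^0\|)^2+\eta)}{2N\min\{L_W\alpha_0\gamma_0,\omega\}}$ for all $N\in\mathbb{N}$, and for every $\varepsilon>0$ the first index $N_f(\varepsilon)$ with $f(x^k)-f^*\le\varepsilon$ satisfies $N_f(\varepsilon)\le\Big\lceil1+\frac{L_W((R+\|x^0\|)^2+\eta)}{2\varepsilon\min\{L_W\alpha_0\gamma_0,\omega\}}\Big\rceil$.
   Context: This is the adaptive scaled gradient algorithm (AdaSGA). $\overline B(0;R)$ is the closed ball; $\mathrm{dist}(x;S)=\inf_{z\in S}\|z-x\|$. *)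

theory Defs
  imports "HOL-Analysis.Analysis"
begin

definition locally_lipschitz :: "('a::metric_space \<Rightarrow> 'b::metric_space) \<Rightarrow> bool" where
  "locally_lipschitz g \<longleftrightarrow>
     (\<forall>x. \<exists>r>0. \<exists>L. \<forall>y\<in>ball x r. \<forall>z\<in>ball x r. dist (g y) (g z) \<le> L * dist y z)"

text \<open>Local Lipschitz estimate used by AdaSGA at step k+1 (k+1 \<ge> 1).\<close>
definition adasga_L :: "('a::real_normed_vector \<Rightarrow> 'a) \<Rightarrow> (nat \<Rightarrow> 'a) \<Rightarrow> nat \<Rightarrow> real" where
  "adasga_L g x k = norm (g (x (Suc k)) - g (x k)) / norm (x (Suc k) - x k)"

text \<open>Step size rule; a vanishing estimate L_k = 0 means omega/(gamma_k L_k) = +infinity.\<close>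
definition adasga_alpha_next :: "real \<Rightarrow> real \<Rightarrow> real \<Rightarrow> real \<Rightarrow> real \<Rightarrow> real \<Rightarrow> real \<Rightarrow> real" where
  "adasga_alpha_next \<omega> \<tau> a_prev g_prev th_prev g_new Lk =
     (let A = a_prev * g_prev / g_new * sqrt (2 * (1 - \<omega>\<^sup>2) + th_prev / \<tau>)
      in if Lk = 0 then A else min A (\<omega> / (g_new * Lk)))"

end

theory Submission
  imports Defs
begin


lemma line_deriv:
  fixes f :: "'a::euclidean_space \<Rightarrow> real" and g :: "'a \<Rightarrow> 'a"
  assumes grad: "\<And>y. (f has_derivative (\<lambda>h. g y \<bullet> h)) (at y)"
  shows "((\<lambda>t. f (p + t *\<^sub>R d)) has_real_derivative (g (p + t *\<^sub>R d) \<bullet> d)) (at t)"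
proof -
  have 1: "((\<lambda>t. p + t *\<^sub>R d) has_derivative (\<lambda>s. s *\<^sub>R d)) (at t)"
    by (auto intro!: derivative_eq_intros)
  have "((f \<circ> (\<lambda>t. p + t *\<^sub>R d)) has_derivative ((\<lambda>h. g (p + t *\<^sub>R d) \<bullet> h) \<circ> (\<lambda>s. s *\<^sub>R d))) (at t)"
    by (rule diff_chain_at[OF 1 grad])
  then show ?thesis
    by (simp add: o_def has_field_derivative_def inner_scaleR_right mult_commute_abs)
qed

lemma grad_ineq:
  fixes f :: "'a::euclidean_space \<Rightarrow> real" and g :: "'a \<Rightarrow> 'a"
  assumes cvx: "convex_on UNIV f"
    and grad: "\<And>y. (f has_derivative (\<lambda>h. g y \<bullet> h)) (at y)"
  shows "f y \<ge> f x + g x \<bullet> (y - x)"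
proof -
  let ?phi = "\<lambda>t. f (x + t *\<^sub>R (y - x))"
  have c: "convex_on UNIV ?phi"
  proof (rule convex_onI)
    fix t s u :: real assume t: "t > 0" "t < 1"
    have "x + ((1 - t) *\<^sub>R s + t *\<^sub>R u) *\<^sub>R (y - x) = (1 - t) *\<^sub>R (x + s *\<^sub>R (y - x)) + t *\<^sub>R (x + u *\<^sub>R (y - x))"
    proof -
      have "(1 - t) *\<^sub>R (x + s *\<^sub>R (y - x)) + t *\<^sub>R (x + u *\<^sub>R (y - x)) = ((1 - t) + t) *\<^sub>R x + ((1 - t) * s + t * u) *\<^sub>R (y - x)"
        by (simp add: scaleR_add_right scaleR_add_left)
      then show ?thesis by simp
    qed
    then show "?phi ((1 - t) *\<^sub>R s + t *\<^sub>R u) \<le> (1 - t) * ?phi s + t * ?phi u"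
      using convex_onD[OF cvx, of t "x + s *\<^sub>R (y - x)" "x + u *\<^sub>R (y - x)"] t by simp
  qed simp
  have d: "(?phi has_real_derivative (g x \<bullet> (y - x))) (at 0 within UNIV)"
    using line_deriv[OF grad, of x "y - x" 0] by simp
  have "?phi 1 - ?phi 0 \<ge> (g x \<bullet> (y - x)) * (1 - 0)"
    by (rule convex_on_imp_above_tangent[OF c]) (auto simp: d)
  then show ?thesis by simp
qed

lemma descent:
  fixes f :: "'a::euclidean_space \<Rightarrow> real" and g :: "'a \<Rightarrow> 'a"
  assumes grad: "\<And>y. (f has_derivative (\<lambda>h. g y \<bullet> h)) (at y)"
    and lip: "\<forall>y\<in>cball 0 R. \<forall>z\<in>cball 0 R. norm (g y - g z) \<le> LW * norm (y - z)"
    and y: "y \<in> cball 0 R" and z: "z \<in> cball 0 R"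
  shows "f z \<le> f y + g y \<bullet> (z - y) + LW / 2 * (norm (z - y))\<^sup>2"
proof -
  define d where "d = z - y"
  define psi where "psi = (\<lambda>t. f (y + t *\<^sub>R d) - t * (g y \<bullet> d) - LW / 2 * t\<^sup>2 * (norm d)\<^sup>2)"
  have "psi 1 \<le> psi 0"
  proof (rule DERIV_nonpos_imp_nonincreasing[of 0 1])
    fix t :: real assume t: "0 \<le> t" "t \<le> 1"
    have mem: "y + t *\<^sub>R d \<in> cball 0 R"
    proof -
      have "y + t *\<^sub>R d = (1 - t) *\<^sub>R y + t *\<^sub>R z" by (simp add: d_def algebra_simps)
      moreover have "(1 - t) *\<^sub>R y + t *\<^sub>R z \<in> cball 0 R"
        using convex_cball[of "0::'a" R] y z t unfolding convex_def by auto
      ultimately show ?thesis by simp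
    qed
    have D: "(psi has_real_derivative (g (y + t *\<^sub>R d) \<bullet> d - (g y \<bullet> d) - LW / 2 * (2 * t) * (norm d)\<^sup>2)) (at t)"
      unfolding psi_def
      by (auto intro!: derivative_eq_intros line_deriv[OF grad])
    have "g (y + t *\<^sub>R d) \<bullet> d - (g y \<bullet> d) = (g (y + t *\<^sub>R d) - g y) \<bullet> d"
      by (simp add: inner_diff_left)
    also have "\<dots> \<le> norm (g (y + t *\<^sub>R d) - g y) * norm d" by (rule norm_cauchy_schwarz)
    also have "\<dots> \<le> LW * norm (t *\<^sub>R d) * norm d"
    proof (rule mult_right_mono)
      have "norm (g (y + t *\<^sub>R d) - g y) \<le> LW * norm ((y + t *\<^sub>R d) - y)"
        using lip mem y by blast
      then show "norm (g (y + t *\<^sub>R d) - g y) \<le> LW * norm (t *\<^sub>R d)" by simp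
    qed simp
    also have "\<dots> = LW * t * (norm d)\<^sup>2" using t by (simp add: power2_eq_square)
    finally have "g (y + t *\<^sub>R d) \<bullet> d - (g y \<bullet> d) - LW / 2 * (2 * t) * (norm d)\<^sup>2 \<le> 0" by simp
    with D show "\<exists>y. (psi has_real_derivative y) (at t) \<and> y \<le> 0" by blast
  qed simp
  moreover have "psi 1 = f z - g y \<bullet> d - LW / 2 * (norm d)\<^sup>2"
    unfolding psi_def by (simp add: d_def)
  moreover have "psi 0 = f y" unfolding psi_def by simp
  ultimately show ?thesis unfolding d_def by linarith
qed



lemma step_core:
  fixes xs x1 G0 G1 :: "'a::real_inner"
  assumes l0: "l0 > 0" and l1: "l1 > 0"
    and th1: "th1 = l1 / l0"
    and cv: "Q1 \<le> G1 \<bullet> (x1 - xs)"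
    and c1: "Q1 - Q0 \<le> - l0 * (G1 \<bullet> G0)"
    and mon: "(G1 - G0) \<bullet> G0 \<le> 0"
    and lip: "l1\<^sup>2 * (norm (G1 - G0))\<^sup>2 \<le> \<omega>\<^sup>2 * l0\<^sup>2 * (norm G0)\<^sup>2"
    and rho: "2 * \<rho> * (1 - \<omega>\<^sup>2) = 1" and e: "e = 2 * \<rho> * \<omega>\<^sup>2" and rpos: "\<rho> \<ge> 0"
    and w: "w = l0 * (1 + \<rho> * th0) - \<rho> * l1 * th1"
  shows "(norm (x1 - l1 *\<^sub>R G1 - xs))\<^sup>2 + e * l1\<^sup>2 * (norm G1)\<^sup>2 + 2 * l1 * (1 + \<rho> * th1) * Q1 + 2 * w * Q0
         \<le> (norm (x1 - xs))\<^sup>2 + e * l0\<^sup>2 * (norm G0)\<^sup>2 + 2 * l0 * (1 + \<rho> * th0) * Q0"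
proof -
  have "x1 - l1 *\<^sub>R G1 - xs = (x1 - xs) - l1 *\<^sub>R G1" by simp
  then have n1: "(norm (x1 - l1 *\<^sub>R G1 - xs))\<^sup>2 = (norm (x1 - xs))\<^sup>2 - 2 * l1 * (G1 \<bullet> (x1 - xs)) + l1\<^sup>2 * (norm G1)\<^sup>2"
    by (simp only: power2_norm_eq_inner) (simp add: inner_diff_left inner_diff_right inner_commute power2_eq_square algebra_simps)
  have nd: "(norm (G1 - G0))\<^sup>2 = (norm G1)\<^sup>2 - 2 * (G1 \<bullet> G0) + (norm G0)\<^sup>2"
    by (simp add: power2_norm_eq_inner inner_diff_left inner_diff_right inner_commute)
  have mon': "G1 \<bullet> G0 \<le> (norm G0)\<^sup>2"
    using mon by (simp add: inner_diff_left power2_norm_eq_inner)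
  have key: "l1 * th1 * l0 = l1\<^sup>2" using l0 th1 by (simp add: power2_eq_square)
  have a1: "2 * l1 * Q1 \<le> 2 * l1 * (G1 \<bullet> (x1 - xs))" using cv l1 by simp
  have a2: "2 * \<rho> * l1 * th1 * (Q1 - Q0) \<le> 2 * \<rho> * l1 * th1 * (- l0 * (G1 \<bullet> G0))"
    using c1 by (intro mult_left_mono) (use l0 l1 th1 rpos in auto)
  have a2': "2 * \<rho> * l1 * th1 * (- l0 * (G1 \<bullet> G0)) = - 2 * \<rho> * l1\<^sup>2 * (G1 \<bullet> G0)"
    using key by (simp add: algebra_simps)
  have a3: "2 * \<rho> * l1\<^sup>2 * ((norm G1)\<^sup>2 - (G1 \<bullet> G0)) \<le> 2 * \<rho> * l1\<^sup>2 * (norm (G1 - G0))\<^sup>2"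
    using nd mon' rpos by (intro mult_left_mono) auto
  have a4: "2 * \<rho> * (l1\<^sup>2 * (norm (G1 - G0))\<^sup>2) \<le> 2 * \<rho> * (\<omega>\<^sup>2 * l0\<^sup>2 * (norm G0)\<^sup>2)"
    using lip rpos by (intro mult_left_mono) auto
  have "2 * \<rho> * (1 - \<omega>\<^sup>2) = 2 * \<rho> - 2 * \<rho> * \<omega>\<^sup>2" by (simp add: algebra_simps)
  then have one_e: "1 + e = 2 * \<rho>" using rho e by linarith
  have "(norm (x1 - l1 *\<^sub>R G1 - xs))\<^sup>2 + e * l1\<^sup>2 * (norm G1)\<^sup>2 + 2 * l1 * (1 + \<rho> * th1) * Q1 + 2 * w * Q0
      - ((norm (x1 - xs))\<^sup>2 + e * l0\<^sup>2 * (norm G0)\<^sup>2 + 2 * l0 * (1 + \<rho> * th0) * Q0)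
      = (2 * l1 * Q1 - 2 * l1 * (G1 \<bullet> (x1 - xs))) + (1 + e) * l1\<^sup>2 * (norm G1)\<^sup>2
        + 2 * \<rho> * l1 * th1 * (Q1 - Q0) - e * l0\<^sup>2 * (norm G0)\<^sup>2"
    unfolding n1 w by (simp add: algebra_simps)
  also have "\<dots> \<le> 0 + 2 * \<rho> * l1\<^sup>2 * (norm G1)\<^sup>2 - 2 * \<rho> * l1\<^sup>2 * (G1 \<bullet> G0) - e * l0\<^sup>2 * (norm G0)\<^sup>2"
  proof -
    have "(1 + e) * l1\<^sup>2 * (norm G1)\<^sup>2 = 2 * \<rho> * l1\<^sup>2 * (norm G1)\<^sup>2" using one_e by simp
    then show ?thesis using a1 a2 a2' by linarith
  qed
  also have "\<dots> = 2 * \<rho> * l1\<^sup>2 * ((norm G1)\<^sup>2 - (G1 \<bullet> G0)) - e * l0\<^sup>2 * (norm G0)\<^sup>2"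
    by (simp add: algebra_simps)
  also have "\<dots> \<le> 0" using a3 a4 e by (simp add: algebra_simps)
  finally show ?thesis by simp
qed

theorem theorem4p4:
  fixes f :: "'a::euclidean_space \<Rightarrow> real" and g :: "'a \<Rightarrow> 'a"
    and x :: "nat \<Rightarrow> 'a" and \<alpha> \<theta> \<gamma> :: "nat \<Rightarrow> real"
    and \<tau> \<omega> \<gamma>min \<gamma>max R LW :: real
  assumes cvx: "convex_on UNIV f"
    and grad: "\<And>y. (f has_derivative (\<lambda>h. g y \<bullet> h)) (at y)"
    and gcont: "continuous_on UNIV g"
    and gloclip: "locally_lipschitz g"
    and argmin_ne: "{z. \<forall>y. f z \<le> f y} \<noteq> {}"
    and \<alpha>0: "\<alpha> 0 > 0" and \<theta>0: "\<theta> 0 > 0"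
    and \<tau>: "\<tau> \<ge> 1" and \<omega>: "0 < \<omega>" "\<omega> \<le> 1 / sqrt 2"
    and \<gamma>range: "0 < \<gamma>min" "\<gamma>min \<le> \<gamma>max" "\<And>k. \<gamma> k \<in> {\<gamma>min..\<gamma>max}"
    and xrec: "\<And>k. x (Suc k) = x k - (\<alpha> k * \<gamma> k) *\<^sub>R g (x k)"
    and \<alpha>rec: "\<And>k. \<alpha> (Suc k) =
          adasga_alpha_next \<omega> \<tau> (\<alpha> k) (\<gamma> k) (\<theta> k) (\<gamma> (Suc k)) (adasga_L g x k)"
    and \<theta>rec: "\<And>k. \<theta> (Suc k) = \<alpha> (Suc k) * \<gamma> (Suc k) / (\<alpha> k * \<gamma> k)"
    and R: "R > sqrt ((infdist (x 0) {z. \<forall>y. f z \<le> f y})\<^sup>2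
                 + 2 * (\<alpha> 0)\<^sup>2 * (\<gamma> 0)\<^sup>2 * (norm (g (x 0)))\<^sup>2
                 + 2 * \<alpha> 0 * \<gamma> 0 * \<theta> 0 * (f (x 0) - (INF y. f y)))
             + infdist (x 0) {z. \<forall>y. f z \<le> f y} + norm (x 0)"
    and LW: "LW > 0"
    and LWlip: "\<forall>y\<in>cball 0 R. \<forall>z\<in>cball 0 R. norm (g y - g z) \<le> LW * norm (y - z)"
  shows "let fstar = (INF y. f y);
             \<eta> = (infdist (x 0) {z. \<forall>y. f z \<le> f y})\<^sup>2
                 + 2 * (\<alpha> 0)\<^sup>2 * (\<gamma> 0)\<^sup>2 * (norm (g (x 0)))\<^sup>2
                 + 2 * \<alpha> 0 * \<gamma> 0 * \<theta> 0 * (f (x 0) - fstar);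
             m = min (LW * \<alpha> 0 * \<gamma> 0) \<omega>
         in (\<forall>N::nat. N \<ge> 1 \<longrightarrow>
               Min ((\<lambda>k. norm (g (x k))) ` {1..N}) \<le> sqrt (LW\<^sup>2 * \<eta> / (real N * m)))
          \<and> (\<forall>\<epsilon>>0. (\<exists>k. norm (g (x k)) \<le> \<epsilon>) \<and>
               int (LEAST k. norm (g (x k)) \<le> \<epsilon>) \<le> \<lceil>1 + LW\<^sup>2 * \<eta> / (\<epsilon>\<^sup>2 * m)\<rceil>)
          \<and> (\<forall>N::nat. N \<ge> 1 \<longrightarrow>
               Min ((\<lambda>k. f (x k)) ` {0..N}) - fstar
                 \<le> LW * ((R + norm (x 0))\<^sup>2 + \<eta>) / (2 * real N * m))
          \<and> (\<forall>\<epsilon>>0. (\<exists>k. f (x k) - fstar \<le> \<epsilon>) \<and>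
               int (LEAST k. f (x k) - fstar \<le> \<epsilon>)
                 \<le> \<lceil>1 + LW * ((R + norm (x 0))\<^sup>2 + \<eta>) / (2 * \<epsilon> * m)\<rceil>)"
  proof -
  define A where "A = {z. \<forall>y. f z \<le> f y}"
  define fs where "fs = (INF y. f y)"
  define l where "l = (\<lambda>k. \<alpha> k * \<gamma> k)"
  define \<rho> where "\<rho> = 1 / (2 * (1 - \<omega>\<^sup>2))"
  define e where "e = 2 * \<rho> * \<omega>\<^sup>2"
  define Q where "Q = (\<lambda>k. f (x k) - fs)"
  define G where "G = (\<lambda>k. g (x k))"
  define dist0 where "dist0 = infdist (x 0) A"
  define \<eta> where "\<eta> = dist0\<^sup>2 + 2 * (\<alpha> 0)\<^sup>2 * (\<gamma> 0)\<^sup>2 * (norm (g (x 0)))\<^sup>2 + 2 * \<alpha> 0 * \<gamma> 0 * \<theta> 0 * (f (x 0) - fs)"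
  define m where "m = min (LW * \<alpha> 0 * \<gamma> 0) \<omega>"
  define Lk where "Lk = adasga_L g x"
  define s where "s = (\<lambda>k. sqrt (2 * (1 - \<omega>\<^sup>2) + \<theta> k / \<tau>))"
  define w where "w = (\<lambda>k. l k * (1 + \<rho> * \<theta> k) - \<rho> * l (Suc k) * \<theta> (Suc k))"
  have \<omega>2: "\<omega>\<^sup>2 \<le> 1 / 2"
  proof -
    have "\<omega>\<^sup>2 \<le> (1 / sqrt 2)\<^sup>2" using \<omega> by (intro power_mono) auto
    then show ?thesis by (simp add: power_divide)
  qed
  have om1: "1 - \<omega>\<^sup>2 \<ge> 1 / 2" using \<omega>2 by simp
  have rho_eq: "2 * \<rho> * (1 - \<omega>\<^sup>2) = 1" using om1 unfolding \<rho>_def by simp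
  have rho_pos: "\<rho> > 0" using om1 unfolding \<rho>_def by simp
  have rho_le: "\<rho> \<le> 1" using om1 unfolding \<rho>_def by (simp add: field_simps)
  have "2 * \<rho> * (1 - \<omega>\<^sup>2) = 2 * \<rho> - 2 * \<rho> * \<omega>\<^sup>2" by (simp add: algebra_simps)
  then have e_eq: "e = 2 * \<rho> - 1" using rho_eq unfolding e_def by linarith
  have e_nn: "e \<ge> 0" unfolding e_def using rho_pos by simp
  have e_le: "e \<le> 1" using e_eq rho_le by simp
  have \<gamma>pos: "\<And>k. \<gamma> k > 0" using \<gamma>range by (meson atLeastAtMost_iff less_le_trans)
  have fcont: "continuous_on UNIV f"
    using grad has_derivative_continuous continuous_at_imp_continuous_on by blast
  have Aeq: "A = (\<Inter>y. {z. f z \<le> f y})" unfolding A_def by auto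
  have Aclosed: "closed A" unfolding Aeq
    by (intro closed_INT ballI closed_Collect_le fcont continuous_on_const)
  have Ane: "A \<noteq> {}" using argmin_ne unfolding A_def .
  obtain xs where xsA: "xs \<in> A" and xsd: "infdist (x 0) A = dist (x 0) xs"
    using infdist_attains_inf[OF Aclosed Ane] by blast
  have dist0_eq: "dist0 = norm (x 0 - xs)" using xsd unfolding dist0_def by (simp add: dist_norm)
  have xsmin: "\<And>y. f xs \<le> f y" using xsA unfolding A_def by simp
  have fs_eq: "fs = f xs" unfolding fs_def by (rule cInf_eq_minimum) (auto simp: xsmin)
  have Qnn: "\<And>k. Q k \<ge> 0" unfolding Q_def fs_eq using xsmin by simp
  have gxs: "g xs = 0"
  proof -
    have "(\<lambda>h. g xs \<bullet> h) = (\<lambda>h. 0)"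
      by (rule has_derivative_local_min[OF grad]) (simp add: xsmin)
    then have "g xs \<bullet> g xs = 0" by metis
    then show ?thesis by simp
  qed
  have xstep: "\<And>k. x (Suc k) = x k - l k *\<^sub>R G k" using xrec unfolding l_def G_def by simp
  have Lk_nn: "\<And>k. Lk k \<ge> 0" unfolding Lk_def adasga_L_def by simp
  have lrule: "\<And>k. l (Suc k) = (if Lk k = 0 then l k * s k else min (l k * s k) (\<omega> / Lk k))"
  proof -
    fix k
    have gs: "\<gamma> (Suc k) > 0" by (rule \<gamma>pos)
    have A1: "\<alpha> k * \<gamma> k / \<gamma> (Suc k) * s k * \<gamma> (Suc k) = l k * s k"
      using gs unfolding l_def by (simp add: field_simps)
    have A2: "\<omega> / (\<gamma> (Suc k) * Lk k) * \<gamma> (Suc k) = \<omega> / Lk k"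
      using gs by (simp add: field_simps)
    have ar: "\<alpha> (Suc k) = (let A = \<alpha> k * \<gamma> k / \<gamma> (Suc k) * s k in if Lk k = 0 then A else min A (\<omega> / (\<gamma> (Suc k) * Lk k)))"
      using \<alpha>rec[of k] unfolding adasga_alpha_next_def Lk_def s_def by simp
    show "l (Suc k) = (if Lk k = 0 then l k * s k else min (l k * s k) (\<omega> / Lk k))"
    proof (cases "Lk k = 0")
      case True
      then show ?thesis using ar A1 unfolding l_def by (simp add: Let_def)
    next
      case False
      have "l (Suc k) = min (\<alpha> k * \<gamma> k / \<gamma> (Suc k) * s k) (\<omega> / (\<gamma> (Suc k) * Lk k)) * \<gamma> (Suc k)"
        using ar False unfolding l_def by (simp add: Let_def)
      also have "\<dots> = min (\<alpha> k * \<gamma> k / \<gamma> (Suc k) * s k * \<gamma> (Suc k)) (\<omega> / (\<gamma> (Suc k) * Lk k) * \<gamma> (Suc k))"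
        using gs by (simp add: min_mult_distrib_right)
      finally show ?thesis using False A1 A2 by simp
    qed
  qed
  have threc: "\<And>k. \<theta> (Suc k) = l (Suc k) / l k" using \<theta>rec unfolding l_def by simp
  have pos: "\<And>k. l k > 0 \<and> \<theta> k > 0"
  proof -
    fix k show "l k > 0 \<and> \<theta> k > 0"
    proof (induction k)
      case 0
      then show ?case using \<alpha>0 \<theta>0 \<gamma>pos[of 0] unfolding l_def by simp
    next
      case (Suc k)
      have "2 * (1 - \<omega>\<^sup>2) + \<theta> k / \<tau> > 0" using om1 Suc \<tau> by (simp add: add_pos_nonneg)
      then have "s k > 0" unfolding s_def by simp
      then have lp: "l (Suc k) > 0"
        using Suc Lk_nn[of k] \<omega> lrule[of k] by (auto simp: min_def)
      then show ?case using Suc threc[of k] by simp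
    qed
  qed
  have lpos: "\<And>k. l k > 0" using pos by blast
  have thpos: "\<And>k. \<theta> k > 0" using pos by blast
  have s_ge1: "\<And>k. s k \<ge> 1"
  proof -
    fix k
    have "1 \<le> 2 * (1 - \<omega>\<^sup>2) + \<theta> k / \<tau>" using om1 thpos[of k] \<tau> by (simp add: add_increasing2)
    then show "s k \<ge> 1" unfolding s_def by simp
  qed
  have lup: "\<And>k. l (Suc k) \<le> l k * s k" using lrule by (simp add: min_def)
  have th_sq: "\<And>k. (\<theta> (Suc k))\<^sup>2 \<le> 2 * (1 - \<omega>\<^sup>2) + \<theta> k"
  proof -
    fix k
    have "\<theta> (Suc k) \<le> s k" using lup[of k] lpos[of k] threc[of k] by (simp add: divide_le_eq mult.commute)
    then have "(\<theta> (Suc k))\<^sup>2 \<le> (s k)\<^sup>2" using thpos[of "Suc k"] by (intro power_mono) auto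
    also have "\<dots> = 2 * (1 - \<omega>\<^sup>2) + \<theta> k / \<tau>" unfolding s_def
      using om1 thpos[of k] \<tau> by (intro real_sqrt_pow2) (simp add: add_nonneg_nonneg)
    also have "\<dots> \<le> 2 * (1 - \<omega>\<^sup>2) + \<theta> k"
      using thpos[of k] \<tau> by (simp add: divide_le_eq)
    finally show "(\<theta> (Suc k))\<^sup>2 \<le> 2 * (1 - \<omega>\<^sup>2) + \<theta> k" .
  qed
  have wnn: "\<And>k. w k \<ge> 0"
  proof -
    fix k
    have "l (Suc k) = \<theta> (Suc k) * l k" using threc[of k] lpos[of k] by simp
    then have "\<rho> * l (Suc k) * \<theta> (Suc k) = \<rho> * l k * (\<theta> (Suc k))\<^sup>2" by (simp add: power2_eq_square)
    also have "\<dots> \<le> \<rho> * l k * (2 * (1 - \<omega>\<^sup>2) + \<theta> k)"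
      using th_sq[of k] rho_pos lpos[of k] by (intro mult_left_mono) auto
    also have "\<dots> = l k * (2 * \<rho> * (1 - \<omega>\<^sup>2)) + \<rho> * l k * \<theta> k" by (simp add: algebra_simps)
    also have "\<dots> = l k * (1 + \<rho> * \<theta> k)" unfolding rho_eq by (simp add: algebra_simps)
    finally show "w k \<ge> 0" unfolding w_def by simp
  qed
  have ndx: "\<And>k. norm (x (Suc k) - x k) = l k * norm (G k)"
    using xstep lpos by (simp add: less_imp_le)
  have lipstep: "\<And>k. l (Suc k) * norm (G (Suc k) - G k) \<le> \<omega> * norm (x (Suc k) - x k)"
  proof -
    fix k
    show "l (Suc k) * norm (G (Suc k) - G k) \<le> \<omega> * norm (x (Suc k) - x k)"
    proof (cases "norm (x (Suc k) - x k) = 0")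
      case True
      then have "x (Suc k) = x k" by simp
      then show ?thesis unfolding G_def by simp
    next
      case nz: False
      show ?thesis
      proof (cases "Lk k = 0")
        case True
        then have "norm (G (Suc k) - G k) = 0" using nz unfolding Lk_def adasga_L_def G_def by simp
        then show ?thesis using \<omega> by simp
      next
        case False
        then have Lp: "Lk k > 0" using Lk_nn[of k] by simp
        have "l (Suc k) \<le> \<omega> / Lk k" using lrule[of k] False by simp
        then have "l (Suc k) * norm (G (Suc k) - G k) \<le> \<omega> / Lk k * norm (G (Suc k) - G k)"
          by (intro mult_right_mono) auto
        also have "\<dots> = \<omega> * norm (x (Suc k) - x k)"
          using nz Lp unfolding Lk_def adasga_L_def G_def by (simp add: field_simps)
        finally show ?thesis .
      qed
    qed
  qed
  have gi: "\<And>u v. f v \<ge> f u + g u \<bullet> (v - u)" by (rule grad_ineq[OF cvx grad])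
  define D where "D = (\<lambda>n. (norm (x (Suc n) - xs))\<^sup>2 + e * (l n)\<^sup>2 * (norm (G n))\<^sup>2 + 2 * l n * (1 + \<rho> * \<theta> n) * Q n)"
  have step: "\<And>n. D (Suc n) + 2 * w n * Q n \<le> D n"
  proof -
    fix n
    have cv: "Q (Suc n) \<le> G (Suc n) \<bullet> (x (Suc n) - xs)"
      using gi[of "x (Suc n)" xs] unfolding Q_def fs_eq G_def by (simp add: inner_diff_right)
    have c1: "Q (Suc n) - Q n \<le> - l n * (G (Suc n) \<bullet> G n)"
      using gi[of "x (Suc n)" "x n"] xstep[of n] unfolding Q_def G_def by simp
    have mon: "(G (Suc n) - G n) \<bullet> G n \<le> 0"
    proof -
      have h1: "f (x (Suc n)) \<ge> f (x n) + G n \<bullet> (- (l n *\<^sub>R G n))"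
        using gi[of "x n" "x (Suc n)"] xstep[of n] unfolding G_def by simp
      have h2: "f (x n) \<ge> f (x (Suc n)) + G (Suc n) \<bullet> (l n *\<^sub>R G n)"
        using gi[of "x (Suc n)" "x n"] xstep[of n] unfolding G_def by simp
      have "l n * ((G (Suc n) - G n) \<bullet> G n) \<le> 0"
        using h1 h2 by (simp add: inner_diff_left algebra_simps)
      then show ?thesis using lpos[of n] by (simp add: mult_le_0_iff)
    qed
    have lip: "(l (Suc n))\<^sup>2 * (norm (G (Suc n) - G n))\<^sup>2 \<le> \<omega>\<^sup>2 * (l n)\<^sup>2 * (norm (G n))\<^sup>2"
    proof -
      have "(l (Suc n) * norm (G (Suc n) - G n))\<^sup>2 \<le> (\<omega> * (l n * norm (G n)))\<^sup>2"
        using lipstep[of n] ndx[of n] lpos[of "Suc n"] by (intro power_mono) auto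
      then show ?thesis by (simp add: power_mult_distrib)
    qed
    have "(norm (x (Suc n) - l (Suc n) *\<^sub>R G (Suc n) - xs))\<^sup>2 + e * (l (Suc n))\<^sup>2 * (norm (G (Suc n)))\<^sup>2
          + 2 * l (Suc n) * (1 + \<rho> * \<theta> (Suc n)) * Q (Suc n) + 2 * w n * Q n
         \<le> (norm (x (Suc n) - xs))\<^sup>2 + e * (l n)\<^sup>2 * (norm (G n))\<^sup>2 + 2 * l n * (1 + \<rho> * \<theta> n) * Q n"
      by (rule step_core[OF lpos lpos threc cv c1 mon lip rho_eq e_def less_imp_le[OF rho_pos]])
         (simp add: w_def)
    then show "D (Suc n) + 2 * w n * Q n \<le> D n" unfolding D_def using xstep[of "Suc n"] by simp
  qed
  have D0: "D 0 \<le> \<eta>"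
  proof -
    have cv: "Q 0 \<le> G 0 \<bullet> (x 0 - xs)"
      using gi[of "x 0" xs] unfolding Q_def fs_eq G_def by (simp add: inner_diff_right)
    have "x 1 - xs = (x 0 - xs) - l 0 *\<^sub>R G 0" using xstep[of 0] by simp
    then have n1: "(norm (x 1 - xs))\<^sup>2 = (norm (x 0 - xs))\<^sup>2 - 2 * l 0 * (G 0 \<bullet> (x 0 - xs)) + (l 0)\<^sup>2 * (norm (G 0))\<^sup>2"
      by (simp only: power2_norm_eq_inner) (simp add: inner_diff_left inner_diff_right inner_commute power2_eq_square algebra_simps)
    have a1: "2 * l 0 * Q 0 \<le> 2 * l 0 * (G 0 \<bullet> (x 0 - xs))" using cv lpos[of 0] by simp
    have a2: "e * (l 0)\<^sup>2 * (norm (G 0))\<^sup>2 \<le> 1 * (l 0)\<^sup>2 * (norm (G 0))\<^sup>2"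
      using e_le by (intro mult_right_mono) auto
    have a3: "\<rho> * (l 0 * \<theta> 0 * Q 0) \<le> 1 * (l 0 * \<theta> 0 * Q 0)"
      using rho_le lpos[of 0] thpos[of 0] Qnn[of 0] by (intro mult_right_mono) auto
    have eta': "\<eta> = (norm (x 0 - xs))\<^sup>2 + 2 * (l 0)\<^sup>2 * (norm (G 0))\<^sup>2 + 2 * l 0 * \<theta> 0 * Q 0"
      unfolding \<eta>_def dist0_eq l_def G_def Q_def by (simp add: power_mult_distrib)
    have "D 0 = (norm (x 1 - xs))\<^sup>2 + e * (l 0)\<^sup>2 * (norm (G 0))\<^sup>2 + 2 * l 0 * Q 0 + 2 * (\<rho> * (l 0 * \<theta> 0 * Q 0))"
      unfolding D_def by (simp add: algebra_simps)
    then show ?thesis unfolding eta' n1 using a1 a2 a3 by linarith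
  qed
  have chain: "\<And>a n. a \<le> n \<Longrightarrow> D n + 2 * (\<Sum>j\<in>{a..<n}. w j * Q j) \<le> D a"
  proof -
    fix a n :: nat assume "a \<le> n"
    then show "D n + 2 * (\<Sum>j\<in>{a..<n}. w j * Q j) \<le> D a"
    proof (induction n rule: dec_induct)
      case base
      then show ?case by simp
    next
      case (step n)
      have "D (Suc n) + 2 * (\<Sum>j\<in>{a..<Suc n}. w j * Q j) = D (Suc n) + 2 * w n * Q n + 2 * (\<Sum>j\<in>{a..<n}. w j * Q j)"
        using step.hyps by (simp add: algebra_simps)
      also have "\<dots> \<le> D n + 2 * (\<Sum>j\<in>{a..<n}. w j * Q j)" using \<open>D (Suc n) + 2 * w n * Q n \<le> D n\<close> by simp
      finally show ?case using step.IH by simp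
    qed
  qed
  have wsum: "\<And>a n. a \<le> n \<Longrightarrow> (\<Sum>j\<in>{a..<n}. w j) + l n * (1 + \<rho> * \<theta> n) = (\<Sum>j\<in>{a..n}. l j) + \<rho> * l a * \<theta> a"
  proof -
    fix a n :: nat assume "a \<le> n"
    then show "(\<Sum>j\<in>{a..<n}. w j) + l n * (1 + \<rho> * \<theta> n) = (\<Sum>j\<in>{a..n}. l j) + \<rho> * l a * \<theta> a"
    proof (induction n rule: dec_induct)
      case base
      then show ?case by (simp add: algebra_simps)
    next
      case (step n)
      have "(\<Sum>j\<in>{a..<Suc n}. w j) + l (Suc n) * (1 + \<rho> * \<theta> (Suc n))
          = ((\<Sum>j\<in>{a..<n}. w j) + l n * (1 + \<rho> * \<theta> n)) + l (Suc n)"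
        using step.hyps by (simp add: w_def algebra_simps)
      also have "\<dots> = (\<Sum>j\<in>{a..Suc n}. l j) + \<rho> * l a * \<theta> a"
        using step.IH step.hyps by simp
      finally show ?case .
    qed
  qed
  have sumnn: "\<And>a n. 0 \<le> (\<Sum>j\<in>{a..<n}. w j * Q j)"
    using wnn Qnn by (intro sum_nonneg mult_nonneg_nonneg) auto
  have Dle: "\<And>n. D n \<le> \<eta>" using chain[of 0] sumnn D0 by (smt (verit) le0)
  have Dge: "\<And>n. D n \<ge> (norm (x (Suc n) - xs))\<^sup>2 + 2 * l n * (1 + \<rho> * \<theta> n) * Q n"
    unfolding D_def using e_nn by simp
  have Dterm_nn: "\<And>n. 2 * l n * (1 + \<rho> * \<theta> n) * Q n \<ge> 0"
    using lpos thpos rho_pos Qnn by (simp add: add_nonneg_nonneg less_imp_le)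
  have distb: "\<And>n. (norm (x (Suc n) - xs))\<^sup>2 \<le> \<eta>"
    using Dle Dge Dterm_nn by (smt (verit))
  have eta_nn: "\<eta> \<ge> 0" using Dle[of 0] Dge[of 0] Dterm_nn[of 0] by (smt (verit) zero_le_power2)
  have dist0_nn: "dist0 \<ge> 0" unfolding dist0_eq by simp
  have Rgt: "R > sqrt \<eta> + dist0 + norm (x 0)" using R unfolding \<eta>_def dist0_def A_def fs_def .
  have xsn: "norm xs \<le> norm (x 0) + dist0"
    unfolding dist0_eq using norm_triangle_ineq4[of "x 0" "x 0 - xs"] by simp
  have inW: "\<And>k. x k \<in> cball 0 R"
  proof -
    fix k show "x k \<in> cball 0 R"
    proof (cases k)
      case 0
      have sq: "sqrt \<eta> \<ge> 0" by (rule real_sqrt_ge_zero[OF eta_nn])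
      have "norm (x 0) \<le> R" using Rgt sq dist0_nn by linarith
      then show ?thesis using 0 by simp
    next
      case (Suc n)
      have "norm (x (Suc n) - xs) \<le> sqrt \<eta>" using distb[of n] by (intro real_le_rsqrt) simp
      moreover have "norm (x (Suc n)) \<le> norm (x (Suc n) - xs) + norm xs" using norm_triangle_sub[of "x (Suc n)" xs] by simp
      ultimately show ?thesis using Suc xsn Rgt by simp
    qed
  qed
  have xsW: "xs \<in> cball 0 R"
  proof -
    have sq: "sqrt \<eta> \<ge> 0" by (rule real_sqrt_ge_zero[OF eta_nn])
    have "norm xs \<le> R" using xsn Rgt sq by linarith
    then show ?thesis by simp
  qed
  have LkW: "\<And>k. Lk k \<le> LW"
  proof -
    fix k
    have "norm (G (Suc k) - G k) \<le> LW * norm (x (Suc k) - x k)"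
      using LWlip inW[of "Suc k"] inW[of k] unfolding G_def by blast
    then show "Lk k \<le> LW" unfolding Lk_def adasga_L_def G_def using LW
      by (cases "norm (x (Suc k) - x k) = 0") (auto simp: divide_le_eq)
  qed
  have m_pos: "m > 0" unfolding m_def using LW \<alpha>0 \<gamma>pos[of 0] \<omega> by simp
  have m_le: "m \<le> \<omega>" unfolding m_def by simp
  have m_lt1: "m < 1"
  proof -
    have "1 / sqrt 2 < (1::real)" by (simp add: divide_less_eq)
    then show ?thesis using m_le \<omega> by linarith
  qed
  have lower: "\<And>k. l k \<ge> m / LW"
  proof -
    fix k show "l k \<ge> m / LW"
    proof (induction k)
      case 0
      have "m \<le> LW * l 0" unfolding m_def l_def by (simp add: mult.assoc)
      then show ?case using LW by (simp add: divide_le_eq mult.commute)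
    next
      case (Suc k)
      have ls: "l k * s k \<ge> l k" using s_ge1[of k] lpos[of k] by simp
      show ?case
      proof (cases "Lk k = 0")
        case True
        then show ?thesis using lrule[of k] ls Suc by simp
      next
        case False
        then have Lp: "Lk k > 0" using Lk_nn[of k] by simp
        have "m / LW \<le> \<omega> / LW" using m_le LW by (simp add: divide_right_mono)
        also have "\<omega> / LW \<le> \<omega> / Lk k" using Lp LkW[of k] \<omega> by (simp add: frac_le)
        finally have "m / LW \<le> \<omega> / Lk k" .
        then show ?thesis using lrule[of k] False ls Suc by simp
      qed
    qed
  qed
  have DL: "\<And>u v. u \<in> cball 0 R \<Longrightarrow> v \<in> cball 0 R \<Longrightarrow> f v \<le> f u + g u \<bullet> (v - u) + LW / 2 * (norm (v - u))\<^sup>2"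
    by (rule descent[OF grad LWlip])
  have Qup: "\<And>k. Q k \<le> LW / 2 * (norm (x k - xs))\<^sup>2"
  proof -
    fix k
    have "f (x k) \<le> f xs + LW / 2 * (norm (x k - xs))\<^sup>2" using DL[OF xsW inW[of k]] gxs by simp
    then show "Q k \<le> LW / 2 * (norm (x k - xs))\<^sup>2" unfolding Q_def fs_eq by simp
  qed
  have smallQ: "\<And>k. Q (Suc k) \<le> Q k - l k * (1 - LW * l k / 2) * (norm (G k))\<^sup>2"
  proof -
    fix k
    have "f (x (Suc k)) \<le> f (x k) + G k \<bullet> (- (l k *\<^sub>R G k)) + LW / 2 * (norm (- (l k *\<^sub>R G k)))\<^sup>2"
      using DL[OF inW[of k] inW[of "Suc k"]] xstep[of k] unfolding G_def by simp
    also have "\<dots> = f (x k) - l k * (1 - LW * l k / 2) * (norm (G k))\<^sup>2"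
    proof -
      have i1: "G k \<bullet> (- (l k *\<^sub>R G k)) = - l k * (norm (G k))\<^sup>2" by (simp add: power2_norm_eq_inner)
      have i2: "(norm (- (l k *\<^sub>R G k)))\<^sup>2 = (l k)\<^sup>2 * (norm (G k))\<^sup>2" using lpos[of k] by (simp add: power_mult_distrib)
      show ?thesis unfolding i1 i2 by (simp add: algebra_simps power2_eq_square)
    qed
    finally show "Q (Suc k) \<le> Q k - l k * (1 - LW * l k / 2) * (norm (G k))\<^sup>2" unfolding Q_def by simp
  qed
  have bigQ: "\<And>k. l k \<ge> 1 / LW \<Longrightarrow> (norm (G k))\<^sup>2 \<le> 2 * LW * Q k"
  proof -
    fix k assume big: "l k \<ge> 1 / LW"
    define t where "t = 1 / (LW * l k)"
    have t0: "t > 0" unfolding t_def using LW lpos[of k] by simp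
    have t1: "t \<le> 1" unfolding t_def using big LW lpos[of k] by (simp add: divide_le_eq field_simps)
    define z where "z = x k - (1 / LW) *\<^sub>R G k"
    have zeq: "z = (1 - t) *\<^sub>R x k + t *\<^sub>R x (Suc k)"
    proof -
      have "(1 - t) *\<^sub>R x k + t *\<^sub>R x (Suc k) = x k - (t * l k) *\<^sub>R G k"
        unfolding xstep[of k] by (simp add: algebra_simps)
      moreover have "t * l k = 1 / LW" unfolding t_def using lpos[of k] by simp
      ultimately show ?thesis unfolding z_def by simp
    qed
    have zW: "z \<in> cball 0 R"
      unfolding zeq using convex_cball[of "0::'a" R] inW[of k] inW[of "Suc k"] t0 t1
      unfolding convex_def by auto
    have "f z \<le> f (x k) + G k \<bullet> (z - x k) + LW / 2 * (norm (z - x k))\<^sup>2"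
      using DL[OF inW[of k] zW] unfolding G_def by simp
    also have "\<dots> = f (x k) - (norm (G k))\<^sup>2 / (2 * LW)"
    proof -
      have zx: "z - x k = - ((1 / LW) *\<^sub>R G k)" unfolding z_def by simp
      have i1: "G k \<bullet> (z - x k) = - (1 / LW) * (norm (G k))\<^sup>2" unfolding zx by (simp add: power2_norm_eq_inner)
      have i2: "(norm (z - x k))\<^sup>2 = (1 / LW)\<^sup>2 * (norm (G k))\<^sup>2" unfolding zx using LW by (simp add: power_mult_distrib power_divide)
      show ?thesis unfolding i1 i2 using LW by (simp add: field_simps power2_eq_square)
    qed
    finally have "f z \<le> f (x k) - (norm (G k))\<^sup>2 / (2 * LW)" .
    moreover have "f xs \<le> f z" by (rule xsmin)
    ultimately have "(norm (G k))\<^sup>2 / (2 * LW) \<le> Q k" unfolding Q_def fs_eq by simp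
    then show "(norm (G k))\<^sup>2 \<le> 2 * LW * Q k" using LW by (simp add: divide_le_eq mult.commute)
  qed
  define c where "c = m / LW * (1 - m / 2)"
  have c_nn: "c \<ge> 0" unfolding c_def using m_pos m_lt1 LW by simp
  have small_coef: "\<And>k. l k \<le> 1 / LW \<Longrightarrow> l k * (1 - LW * l k / 2) \<ge> c"
  proof -
    fix k assume sm: "l k \<le> 1 / LW"
    define u where "u = LW * l k"
    have u1: "u \<le> 1" unfolding u_def using sm LW by (simp add: le_divide_eq mult.commute)
    have um: "u \<ge> m" unfolding u_def using lower[of k] LW by (simp add: divide_le_eq mult.commute)
    have "(u - m) * (1 - (u + m) / 2) \<ge> 0" using u1 um m_lt1 by (intro mult_nonneg_nonneg) auto
    moreover have "(u - m) * (1 - (u + m) / 2) = u * (1 - u / 2) - m * (1 - m / 2)" by (simp add: field_simps)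
    ultimately have "u * (1 - u / 2) \<ge> m * (1 - m / 2)" by linarith
    then have "u * (1 - u / 2) / LW \<ge> m * (1 - m / 2) / LW" using LW by (simp add: divide_right_mono)
    moreover have "u * (1 - u / 2) / LW = l k * (1 - LW * l k / 2)" unfolding u_def using LW by simp
    moreover have "m * (1 - m / 2) / LW = c" unfolding c_def by simp
    ultimately show "l k * (1 - LW * l k / 2) \<ge> c" by simp
  qed
  have small_mono: "\<And>k. l k \<le> 1 / LW \<Longrightarrow> Q (Suc k) \<le> Q k"
  proof -
    fix k assume sm: "l k \<le> 1 / LW"
    have "l k * (1 - LW * l k / 2) \<ge> 0" using small_coef[OF sm] c_nn by simp
    then have "l k * (1 - LW * l k / 2) * (norm (G k))\<^sup>2 \<ge> 0" by simp
    then show "Q (Suc k) \<le> Q k" using smallQ[of k] by simp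
  qed
  have partA: "\<And>N. N \<ge> 1 \<Longrightarrow> Min ((\<lambda>k. norm (G k)) ` {1..N}) \<le> sqrt (LW\<^sup>2 * \<eta> / (real N * m))"
  proof -
    fix N :: nat assume N1: "N \<ge> 1"
    define Gm where "Gm = Min ((\<lambda>k. norm (G k)) ` {1..N})"
    define M where "M = Gm\<^sup>2"
    have fin: "finite ((\<lambda>k. norm (G k)) ` {1..N})" by simp
    have ne: "(\<lambda>k. norm (G k)) ` {1..N} \<noteq> {}" using N1 by auto
    have Gm_nn: "Gm \<ge> 0" unfolding Gm_def using Min_in[OF fin ne] by auto
    have GM: "\<And>k. 1 \<le> k \<Longrightarrow> k \<le> N \<Longrightarrow> M \<le> (norm (G k))\<^sup>2"
    proof -
      fix k assume "1 \<le> k" "k \<le> N"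
      then have "Gm \<le> norm (G k)" unfolding Gm_def by (intro Min_le fin) auto
      then show "M \<le> (norm (G k))\<^sup>2" unfolding M_def using Gm_nn by (intro power_mono) auto
    qed
    have M_nn: "M \<ge> 0" unfolding M_def by simp
    define S where "S = {j \<in> {0..N}. j = 0 \<or> l j \<ge> 1 / LW}"
    define B where "B = Max S"
    have Sfin: "finite S" unfolding S_def by simp
    have Sne: "0 \<in> S" unfolding S_def by simp
    have BS: "B \<in> S" unfolding B_def using Sfin Sne by (intro Max_in) auto
    have BN: "B \<le> N" using BS unfolding S_def by simp
    have Bbig: "B \<noteq> 0 \<Longrightarrow> l B \<ge> 1 / LW" using BS unfolding S_def by simp
    have after: "\<And>j. B < j \<Longrightarrow> j \<le> N \<Longrightarrow> l j < 1 / LW"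
    proof -
      fix j assume "B < j" "j \<le> N"
      then have "j \<notin> S" using Max_ge[OF Sfin] unfolding B_def by (meson not_le)
      then show "l j < 1 / LW" using \<open>B < j\<close> \<open>j \<le> N\<close> unfolding S_def by auto
    qed
    have run: "\<And>d. d \<le> N - B \<Longrightarrow> Q (N + 1 - d) \<ge> real d * c * M"
    proof -
      fix d show "d \<le> N - B \<Longrightarrow> Q (N + 1 - d) \<ge> real d * c * M"
      proof (induction d)
        case 0
        then show ?case using Qnn by simp
      next
        case (Suc d)
        define i where "i = N - d"
        have iS: "Suc i = N + 1 - d" using Suc.prems unfolding i_def by presburger
        have iN: "N + 1 - Suc d = i" using Suc.prems unfolding i_def by presburger
        have i1: "1 \<le> i" "i \<le> N" "B < i" using Suc.prems unfolding i_def by presburger+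
        have sm: "l i \<le> 1 / LW" using after[OF i1(3) i1(2)] by simp
        have "Q (Suc i) \<le> Q i - l i * (1 - LW * l i / 2) * (norm (G i))\<^sup>2" by (rule smallQ)
        moreover have "l i * (1 - LW * l i / 2) * (norm (G i))\<^sup>2 \<ge> c * M"
          using small_coef[OF sm] GM[OF i1(1) i1(2)] c_nn M_nn by (intro mult_mono) auto
        moreover have "Q (Suc i) \<ge> real d * c * M" using Suc.IH Suc.prems iS by simp
        ultimately show ?case unfolding iN by (simp add: algebra_simps)
      qed
    qed
    have runB: "Q (Suc B) \<ge> real (N - B) * c * M" using run[of "N - B"] BN by (simp add: Suc_diff_le)
    have distB: "(norm (x (Suc B) - xs))\<^sup>2 \<ge> real (N - B) * m * M / LW\<^sup>2"
    proof -
      have "real (N - B) * c * M \<le> LW / 2 * (norm (x (Suc B) - xs))\<^sup>2" using runB Qup[of "Suc B"] by simp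
      moreover have "real (N - B) * m * M / LW\<^sup>2 \<le> 2 / LW * (real (N - B) * c * M)"
      proof -
        have "real (N - B) * m * M * 1 \<le> real (N - B) * m * M * (2 - m)"
          using m_lt1 m_pos M_nn by (intro mult_left_mono) auto
        then show ?thesis unfolding c_def using LW by (simp add: field_simps power2_eq_square)
      qed
      moreover have "2 / LW * (real (N - B) * c * M) \<le> 2 / LW * (LW / 2 * (norm (x (Suc B) - xs))\<^sup>2)"
        using runB Qup[of "Suc B"] LW by (intro mult_left_mono) auto
      moreover have "2 / LW * (LW / 2 * (norm (x (Suc B) - xs))\<^sup>2) = (norm (x (Suc B) - xs))\<^sup>2" using LW by simp
      ultimately show ?thesis by linarith
    qed
    have before: "\<And>j. 1 \<le> j \<Longrightarrow> j \<le> B \<Longrightarrow> Q j \<ge> M / (2 * LW)"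
    proof -
      have "\<And>d. d < B \<Longrightarrow> Q (B - d) \<ge> M / (2 * LW)"
      proof -
        fix d show "d < B \<Longrightarrow> Q (B - d) \<ge> M / (2 * LW)"
        proof (induction d)
          case 0
          then have "(norm (G B))\<^sup>2 \<le> 2 * LW * Q B" using Bbig bigQ by simp
          moreover have "M \<le> (norm (G B))\<^sup>2" using GM[of B] 0 BN by simp
          ultimately show ?case using LW by (simp add: divide_le_eq mult.commute)
        next
          case (Suc d)
          define j where "j = B - Suc d"
          have j1: "1 \<le> j" "j \<le> N" "Suc j = B - d" using Suc.prems BN unfolding j_def by auto
          show ?case
          proof (cases "l j \<ge> 1 / LW")
            case True
            then have "(norm (G j))\<^sup>2 \<le> 2 * LW * Q j" using bigQ by simp
            moreover have "M \<le> (norm (G j))\<^sup>2" using GM j1 by simp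
            ultimately show ?thesis using LW unfolding j_def by (simp add: divide_le_eq mult.commute)
          next
            case False
            then have "Q (Suc j) \<le> Q j" using small_mono by simp
            moreover have "Q (Suc j) \<ge> M / (2 * LW)" using Suc.IH Suc.prems j1 by simp
            ultimately show ?thesis unfolding j_def by simp
          qed
        qed
      qed
      then show "\<And>j. 1 \<le> j \<Longrightarrow> j \<le> B \<Longrightarrow> Q j \<ge> M / (2 * LW)"
        by (metis diff_diff_cancel diff_less le_less_trans less_numeral_extra(1) nat_less_le zero_less_diff)
    qed
    have weighted: "\<eta> \<ge> (norm (x (Suc B) - xs))\<^sup>2 + real B * m * M / LW\<^sup>2"
    proof (cases "B = 0")
      case True
      then show ?thesis using distb[of 0] by simp
    next
      case False
      then have B1: "1 \<le> B" by simp
      have D10: "D 1 \<le> D 0" using step[of 0] mult_nonneg_nonneg[OF wnn[of 0] Qnn[of 0]] by simp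
      have ch: "D B + 2 * (\<Sum>j\<in>{1..<B}. w j * Q j) \<le> \<eta>" using chain[OF B1] D10 D0 by simp
      have s1: "(\<Sum>j\<in>{1..<B}. w j * Q j) \<ge> (\<Sum>j\<in>{1..<B}. w j * (M / (2 * LW)))"
        using before wnn by (intro sum_mono mult_left_mono) auto
      have s2: "l B * (1 + \<rho> * \<theta> B) * Q B \<ge> l B * (1 + \<rho> * \<theta> B) * (M / (2 * LW))"
        using before[OF B1 order_refl] lpos[of B] thpos[of B] rho_pos
        by (intro mult_left_mono) (auto simp: add_nonneg_nonneg less_imp_le)
      have ws: "(\<Sum>j\<in>{1..<B}. w j) + l B * (1 + \<rho> * \<theta> B) = (\<Sum>j\<in>{1..B}. l j) + \<rho> * l 1 * \<theta> 1"
        by (rule wsum[OF B1])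
      have lsum: "(\<Sum>j\<in>{1..B}. l j) \<ge> real B * (m / LW)"
        using sum_bounded_below[of "{1..B}" "m / LW" l] lower by simp
      have extra: "\<rho> * l 1 * \<theta> 1 \<ge> 0" using rho_pos lpos[of 1] thpos[of 1] by simp
      have "(\<Sum>j\<in>{1..<B}. w j * (M / (2 * LW))) + l B * (1 + \<rho> * \<theta> B) * (M / (2 * LW))
            = ((\<Sum>j\<in>{1..<B}. w j) + l B * (1 + \<rho> * \<theta> B)) * (M / (2 * LW))"
        unfolding sum_distrib_right[symmetric] by (simp only: distrib_right)
      also have "\<dots> \<ge> real B * (m / LW) * (M / (2 * LW))"
        unfolding ws using lsum extra M_nn LW by (intro mult_right_mono) auto
      finally have low: "(\<Sum>j\<in>{1..<B}. w j * (M / (2 * LW))) + l B * (1 + \<rho> * \<theta> B) * (M / (2 * LW)) \<ge> real B * (m / LW) * (M / (2 * LW))" .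
      have eqv: "2 * (real B * (m / LW) * (M / (2 * LW))) = real B * m * M / LW\<^sup>2"
        using LW by (simp add: field_simps power2_eq_square)
      have "2 * ((\<Sum>j\<in>{1..<B}. w j * Q j) + l B * (1 + \<rho> * \<theta> B) * Q B) \<ge> real B * m * M / LW\<^sup>2"
      proof -
        have "real B * (m / LW) * (M / (2 * LW)) \<le> (\<Sum>j\<in>{1..<B}. w j * Q j) + l B * (1 + \<rho> * \<theta> B) * Q B"
          by (rule order_trans[OF low add_mono[OF s1 s2]])
        then have "2 * (real B * (m / LW) * (M / (2 * LW))) \<le> 2 * ((\<Sum>j\<in>{1..<B}. w j * Q j) + l B * (1 + \<rho> * \<theta> B) * Q B)"
          by (rule mult_left_mono) simp
        then show ?thesis unfolding eqv .
      qed
      then show ?thesis using ch Dge[of B] by (simp add: algebra_simps)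
    qed
    have "real N * m * M / LW\<^sup>2 = real (N - B) * m * M / LW\<^sup>2 + real B * m * M / LW\<^sup>2"
    proof -
      have e1: "real N * m * M = real (N - B) * m * M + real B * m * M" using BN by (simp add: of_nat_diff algebra_simps)
      show ?thesis unfolding e1 add_divide_distrib ..
    qed
    then have main: "real N * m * M / LW\<^sup>2 \<le> \<eta>" using weighted distB by linarith
    have Npos: "real N * m > 0" using N1 m_pos by simp
    have "M \<le> LW\<^sup>2 * \<eta> / (real N * m)"
      using main Npos LW by (simp add: field_simps)
    then have "Gm \<le> sqrt (LW\<^sup>2 * \<eta> / (real N * m))" unfolding M_def by (intro real_le_rsqrt)
    then show "Min ((\<lambda>k. norm (G k)) ` {1..N}) \<le> sqrt (LW\<^sup>2 * \<eta> / (real N * m))" unfolding Gm_def .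
  qed
  have partA2: "\<And>\<epsilon>. \<epsilon> > 0 \<Longrightarrow> (\<exists>k. norm (G k) \<le> \<epsilon>) \<and> int (LEAST k. norm (G k) \<le> \<epsilon>) \<le> \<lceil>1 + LW\<^sup>2 * \<eta> / (\<epsilon>\<^sup>2 * m)\<rceil>"
  proof -
    fix \<epsilon> :: real assume ep: "\<epsilon> > 0"
    define Y where "Y = LW\<^sup>2 * \<eta> / (\<epsilon>\<^sup>2 * m)"
    have Y_nn: "Y \<ge> 0" unfolding Y_def using eta_nn m_pos ep by simp
    define N0 where "N0 = max 1 (nat \<lceil>Y\<rceil>)"
    have N01: "N0 \<ge> 1" unfolding N0_def by simp
    have N0Y: "real N0 \<ge> Y" 
    proof -
      have "Y \<le> of_int \<lceil>Y\<rceil>" by (rule le_of_int_ceiling)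
      also have "(of_int \<lceil>Y\<rceil> :: real) = real (nat \<lceil>Y\<rceil>)" using Y_nn by simp
      also have "\<dots> \<le> real N0" unfolding N0_def by simp
      finally show ?thesis .
    qed 
    have "LW\<^sup>2 * \<eta> / (real N0 * m) \<le> \<epsilon>\<^sup>2"
    proof -
      have "LW\<^sup>2 * \<eta> \<le> \<epsilon>\<^sup>2 * m * real N0" using N0Y ep m_pos unfolding Y_def by (simp add: divide_le_eq mult.commute)
      then show ?thesis using N01 m_pos by (simp add: divide_le_eq mult.commute mult.left_commute)
    qed
    then have "sqrt (LW\<^sup>2 * \<eta> / (real N0 * m)) \<le> \<epsilon>" using ep by (intro real_le_lsqrt) auto
    then have mn: "Min ((\<lambda>k. norm (G k)) ` {1..N0}) \<le> \<epsilon>" using partA[OF N01] by linarith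
    have fin: "finite ((\<lambda>k. norm (G k)) ` {1..N0})" by simp
    have ne: "(\<lambda>k. norm (G k)) ` {1..N0} \<noteq> {}" using N01 by auto
    obtain k where k: "k \<in> {1..N0}" "Min ((\<lambda>k. norm (G k)) ` {1..N0}) = norm (G k)"
      using Min_in[OF fin ne] by auto
    have gk: "norm (G k) \<le> \<epsilon>" using mn k by simp
    have "(LEAST k. norm (G k) \<le> \<epsilon>) \<le> k" by (rule Least_le) (rule gk)
    also have "k \<le> N0" using k by simp
    finally have "int (LEAST k. norm (G k) \<le> \<epsilon>) \<le> int N0" by simp
    also have "int N0 \<le> \<lceil>1 + Y\<rceil>" unfolding N0_def using Y_nn ceiling_mono[of Y "1 + Y"] by (auto simp: max_def)
    finally show "(\<exists>k. norm (G k) \<le> \<epsilon>) \<and> int (LEAST k. norm (G k) \<le> \<epsilon>) \<le> \<lceil>1 + LW\<^sup>2 * \<eta> / (\<epsilon>\<^sup>2 * m)\<rceil>"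
      using gk unfolding Y_def by blast
  qed
  define Cb where "Cb = LW * ((R + norm (x 0))\<^sup>2 + \<eta>)"
  have Cb_pos: "Cb > 0"
  proof -
    have "R > 0" using Rgt real_sqrt_ge_zero[OF eta_nn] dist0_nn norm_ge_zero[of "x 0"] by linarith
    then have "R + norm (x 0) > 0" using norm_ge_zero[of "x 0"] by linarith
    then have "(R + norm (x 0))\<^sup>2 > 0" by simp
    then have "(R + norm (x 0))\<^sup>2 + \<eta> > 0" using eta_nn by linarith
    then show ?thesis unfolding Cb_def using LW by simp
  qed
  have partB: "\<And>N. N \<ge> 1 \<Longrightarrow> Min ((\<lambda>k. f (x k)) ` {0..N}) - fs \<le> Cb / (2 * real N * m)"
  proof -
    fix N :: nat assume N1: "N \<ge> 1"
    define q where "q = Min ((\<lambda>k. f (x k)) ` {0..N}) - fs"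
    have fin: "finite ((\<lambda>k. f (x k)) ` {0..N})" by simp
    have ne: "(\<lambda>k. f (x k)) ` {0..N} \<noteq> {}" by auto
    have q_nn: "q \<ge> 0" unfolding q_def fs_eq using Min_in[OF fin ne] xsmin by auto
    have Qq: "\<And>j. j \<le> N \<Longrightarrow> q \<le> Q j" unfolding q_def Q_def by (simp add: fin)
    have ch: "D N + 2 * (\<Sum>j\<in>{0..<N}. w j * Q j) \<le> \<eta>" using chain[of 0 N] D0 by simp
    have s1: "(\<Sum>j\<in>{0..<N}. w j * Q j) \<ge> (\<Sum>j\<in>{0..<N}. w j * q)"
      using Qq wnn by (intro sum_mono mult_left_mono) auto
    have s2: "l N * (1 + \<rho> * \<theta> N) * Q N \<ge> l N * (1 + \<rho> * \<theta> N) * q"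
      using Qq[of N] lpos[of N] thpos[of N] rho_pos
      by (intro mult_left_mono) (auto simp: add_nonneg_nonneg less_imp_le)
    have ws: "(\<Sum>j\<in>{0..<N}. w j) + l N * (1 + \<rho> * \<theta> N) = (\<Sum>j\<in>{0..N}. l j) + \<rho> * l 0 * \<theta> 0"
      by (rule wsum) simp
    have lsum: "(\<Sum>j\<in>{0..N}. l j) \<ge> real (N + 1) * (m / LW)"
      using sum_bounded_below[of "{0..N}" "m / LW" l] lower by simp
    have extra: "\<rho> * l 0 * \<theta> 0 \<ge> 0" using rho_pos lpos[of 0] thpos[of 0] by simp
    have "(\<Sum>j\<in>{0..<N}. w j * q) + l N * (1 + \<rho> * \<theta> N) * q = ((\<Sum>j\<in>{0..<N}. w j) + l N * (1 + \<rho> * \<theta> N)) * q"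
      unfolding sum_distrib_right[symmetric] by (simp only: distrib_right)
    also have "\<dots> \<ge> real (N + 1) * (m / LW) * q"
      unfolding ws using lsum extra q_nn by (intro mult_right_mono) auto
    finally have low: "(\<Sum>j\<in>{0..<N}. w j * q) + l N * (1 + \<rho> * \<theta> N) * q \<ge> real (N + 1) * (m / LW) * q" .
    have kk1: "real (N + 1) * (m / LW) * q \<le> (\<Sum>j\<in>{0..<N}. w j * Q j) + l N * (1 + \<rho> * \<theta> N) * Q N"
      by (rule order_trans[OF low add_mono[OF s1 s2]])
    have kk2: "2 * ((\<Sum>j\<in>{0..<N}. w j * Q j) + l N * (1 + \<rho> * \<theta> N) * Q N) \<le> \<eta>"
    proof -
      have "2 * ((\<Sum>j\<in>{0..<N}. w j * Q j) + l N * (1 + \<rho> * \<theta> N) * Q N) = 2 * (\<Sum>j\<in>{0..<N}. w j * Q j) + 2 * l N * (1 + \<rho> * \<theta> N) * Q N"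
        by (simp add: algebra_simps)
      moreover have "(norm (x (Suc N) - xs))\<^sup>2 \<ge> 0" by simp
      ultimately show ?thesis using ch Dge[of N] by linarith
    qed
    have key: "2 * (real (N + 1) * (m / LW) * q) \<le> \<eta>"
      using order_trans[OF mult_left_mono[OF kk1, of 2] kk2] by simp
    have pos: "2 * real (N + 1) * m > 0" using m_pos by simp
    have "q * (2 * real (N + 1) * m) \<le> LW * \<eta>" using key LW by (simp add: field_simps)
    then have "q \<le> LW * \<eta> / (2 * real (N + 1) * m)"
      by (simp only: pos_le_divide_eq[OF pos])
    also have "\<dots> \<le> Cb / (2 * real N * m)"
    proof (rule frac_le)
      show "0 \<le> Cb" using Cb_pos by simp
      show "LW * \<eta> \<le> Cb" unfolding Cb_def using LW by (simp add: mult_left_mono)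
      show "0 < 2 * real N * m" using N1 m_pos by simp
      show "2 * real N * m \<le> 2 * real (N + 1) * m" using m_pos by simp
    qed
    finally show "Min ((\<lambda>k. f (x k)) ` {0..N}) - fs \<le> Cb / (2 * real N * m)" unfolding q_def .
  qed
  have partB2: "\<And>\<epsilon>. \<epsilon> > 0 \<Longrightarrow> (\<exists>k. f (x k) - fs \<le> \<epsilon>) \<and> int (LEAST k. f (x k) - fs \<le> \<epsilon>) \<le> \<lceil>1 + Cb / (2 * \<epsilon> * m)\<rceil>"
  proof -
    fix \<epsilon> :: real assume ep: "\<epsilon> > 0"
    define Y where "Y = Cb / (2 * \<epsilon> * m)"
    have Y_nn: "Y \<ge> 0" unfolding Y_def using Cb_pos m_pos ep by simp
    define N0 where "N0 = max 1 (nat \<lceil>Y\<rceil>)"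
    have N01: "N0 \<ge> 1" unfolding N0_def by simp
    have N0Y: "real N0 \<ge> Y" 
    proof -
      have "Y \<le> of_int \<lceil>Y\<rceil>" by (rule le_of_int_ceiling)
      also have "(of_int \<lceil>Y\<rceil> :: real) = real (nat \<lceil>Y\<rceil>)" using Y_nn by simp
      also have "\<dots> \<le> real N0" unfolding N0_def by simp
      finally show ?thesis .
    qed
    have le: "Cb / (2 * real N0 * m) \<le> \<epsilon>"
    proof -
      have "Cb \<le> 2 * \<epsilon> * m * real N0" using N0Y ep m_pos unfolding Y_def by (simp add: divide_le_eq mult.commute)
      then show ?thesis using N01 m_pos by (simp add: divide_le_eq mult.commute mult.left_commute)
    qed
    have fin: "finite ((\<lambda>k. f (x k)) ` {0..N0})" by simp
    have ne: "(\<lambda>k. f (x k)) ` {0..N0} \<noteq> {}" by auto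
    obtain k where k: "k \<in> {0..N0}" "Min ((\<lambda>k. f (x k)) ` {0..N0}) = f (x k)"
      using Min_in[OF fin ne] by (metis (no_types, lifting) imageE)
    have gk: "f (x k) - fs \<le> \<epsilon>" using partB[OF N01] le k by simp
    have "(LEAST k. f (x k) - fs \<le> \<epsilon>) \<le> k" by (rule Least_le) (rule gk)
    also have "k \<le> N0" using k by simp
    finally have "int (LEAST k. f (x k) - fs \<le> \<epsilon>) \<le> int N0" by simp
    also have "int N0 \<le> \<lceil>1 + Y\<rceil>" unfolding N0_def using Y_nn ceiling_mono[of Y "1 + Y"] by (auto simp: max_def)
    finally show "(\<exists>k. f (x k) - fs \<le> \<epsilon>) \<and> int (LEAST k. f (x k) - fs \<le> \<epsilon>) \<le> \<lceil>1 + Cb / (2 * \<epsilon> * m)\<rceil>"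
      using gk unfolding Y_def by blast
  qed
  have partA': "\<forall>N::nat. N \<ge> 1 \<longrightarrow> Min ((\<lambda>k. norm (g (x k))) ` {1..N}) \<le> sqrt (LW\<^sup>2 * \<eta> / (real N * m))"
    using partA unfolding G_def by blast
  have partA2': "\<forall>\<epsilon>>0. (\<exists>k. norm (g (x k)) \<le> \<epsilon>) \<and> int (LEAST k. norm (g (x k)) \<le> \<epsilon>) \<le> \<lceil>1 + LW\<^sup>2 * \<eta> / (\<epsilon>\<^sup>2 * m)\<rceil>"
    using partA2 unfolding G_def by blast
  have partB': "\<forall>N::nat. N \<ge> 1 \<longrightarrow> Min ((\<lambda>k. f (x k)) ` {0..N}) - fs \<le> LW * ((R + norm (x 0))\<^sup>2 + \<eta>) / (2 * real N * m)"
    using partB unfolding Cb_def by blast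
  have partB2': "\<forall>\<epsilon>>0. (\<exists>k. f (x k) - fs \<le> \<epsilon>) \<and> int (LEAST k. f (x k) - fs \<le> \<epsilon>) \<le> \<lceil>1 + LW * ((R + norm (x 0))\<^sup>2 + \<eta>) / (2 * \<epsilon> * m)\<rceil>"
    using partB2 unfolding Cb_def by blast
  show ?thesis
    unfolding Let_def
    using partA' partA2' partB' partB2' unfolding \<eta>_def m_def fs_def dist0_def A_def
    by blast
qed

end
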